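(* Let $G$ be a graph containing a subgraph $F$ isomorphic to $F_4$, with vertices labelled $u_0,u_1,u_2,u_3$ as described in the context and $U=\{u_1,u_2,u_3\}$, and let $T$ be a triangle of $G$ vertex-disjoint from $F$. If $e(U,V(T))\geq 7$, then $G[V(T)\cup V(F)]$ contains a triangle and a quadrilateral that are vertex-disjoint.
   Context: All graphs are finite, simple and undirected. $F_4$ denotes the graph with $4$ vertices and $4$ edges not containing a $4$-cycle, i.e. a claw (star $K_{1,3}$) with one additional edge joining two of its leaves. In a copy of $F_4$, $u_0$ denotes its unique vertex of degree $3$ in $F_4$, $u_1,u_2$ its two vertices of degree $2$ in $F_4$, and $u_3$ its unique vertex of degree $1$ in $F_4$ (so $F_4$ has edges $u_0u_1,u_0u_2,u_1u_2,u_0u_3$). For disjoint vertex sets $L,M$, $e(L,M)$ is the number of edges of $G$ between $L$ and $M$. $G[W]$ is the subgraph induced by $W$. *)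

theory Defs
  imports Main
begin

definition simple_graph :: "'a set \<Rightarrow> ('a \<Rightarrow> 'a \<Rightarrow> bool) \<Rightarrow> bool" where
  "simple_graph V E \<longleftrightarrow> finite V \<and> (\<forall>x y. E x y \<longrightarrow> E y x) \<and> (\<forall>x. \<not> E x x)
     \<and> (\<forall>x y. E x y \<longrightarrow> x \<in> V \<and> y \<in> V)"

definition e_between :: "('a \<Rightarrow> 'a \<Rightarrow> bool) \<Rightarrow> 'a set \<Rightarrow> 'a set \<Rightarrow> nat" where
  "e_between E L M = card {(x, y). x \<in> L \<and> y \<in> M \<and> E x y}"

definition is_triangle :: "'a set \<Rightarrow> ('a \<Rightarrow> 'a \<Rightarrow> bool) \<Rightarrow> 'a \<Rightarrow> 'a \<Rightarrow> 'a \<Rightarrow> bool" where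
  "is_triangle V E a b c \<longleftrightarrow> a \<in> V \<and> b \<in> V \<and> c \<in> V \<and> distinct [a, b, c]
     \<and> E a b \<and> E b c \<and> E c a"

definition is_quadrilateral :: "'a set \<Rightarrow> ('a \<Rightarrow> 'a \<Rightarrow> bool) \<Rightarrow> 'a \<Rightarrow> 'a \<Rightarrow> 'a \<Rightarrow> 'a \<Rightarrow> bool" where
  "is_quadrilateral V E a b c d \<longleftrightarrow> a \<in> V \<and> b \<in> V \<and> c \<in> V \<and> d \<in> V \<and> distinct [a, b, c, d]
     \<and> E a b \<and> E b c \<and> E c d \<and> E d a"

definition induced_edges :: "('a \<Rightarrow> 'a \<Rightarrow> bool) \<Rightarrow> 'a set \<Rightarrow> 'a \<Rightarrow> 'a \<Rightarrow> bool" where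
  "induced_edges E W x y \<longleftrightarrow> x \<in> W \<and> y \<in> W \<and> E x y"

text \<open>A copy of F_4 in (V,E) with u0 of degree 3, u1 u2 of degree 2, u3 of degree 1
  (as a subgraph, not necessarily induced).\<close>
definition is_F4 :: "'a set \<Rightarrow> ('a \<Rightarrow> 'a \<Rightarrow> bool) \<Rightarrow> 'a \<Rightarrow> 'a \<Rightarrow> 'a \<Rightarrow> 'a \<Rightarrow> bool" where
  "is_F4 V E u0 u1 u2 u3 \<longleftrightarrow> u0 \<in> V \<and> u1 \<in> V \<and> u2 \<in> V \<and> u3 \<in> V
     \<and> distinct [u0, u1, u2, u3] \<and> E u0 u1 \<and> E u0 u2 \<and> E u1 u2 \<and> E u0 u3"

end

theory Submission
  imports Defs
begin

lemma card_le6: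
  assumes "S \<subseteq> A" "finite A" "card A = 9" "x \<notin> S" "y \<notin> S" "z \<notin> S"
    "x \<in> A" "y \<in> A" "z \<in> A" "distinct [x,y,z]"
  shows "card S \<le> 6"
proof -
  have "S \<subseteq> A - {x,y,z}" using assms by auto
  moreover have "card (A - {x,y,z}) = 6" using assms by (simp add: card_Diff_subset)
  ultimately show ?thesis using assms(2) by (metis card_mono finite_Diff)
qed

theorem lemma9:
  fixes V :: "'a set" and E :: "'a \<Rightarrow> 'a \<Rightarrow> bool"
    and u0 u1 u2 u3 t1 t2 t3 :: 'a
  assumes "simple_graph V E"
    and "is_F4 V E u0 u1 u2 u3"
    and "is_triangle V E t1 t2 t3"
    and "{t1, t2, t3} \<inter> {u0, u1, u2, u3} = {}"
    and "e_between E {u1, u2, u3} {t1, t2, t3} \<ge> 7"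
  shows "\<exists>a b c p q r s.
           is_triangle ({t1, t2, t3} \<union> {u0, u1, u2, u3})
             (induced_edges E ({t1, t2, t3} \<union> {u0, u1, u2, u3})) a b c
         \<and> is_quadrilateral ({t1, t2, t3} \<union> {u0, u1, u2, u3})
             (induced_edges E ({t1, t2, t3} \<union> {u0, u1, u2, u3})) p q r s
         \<and> {a, b, c} \<inter> {p, q, r, s} = {}"
proof -
  have sym: "\<And>x y. E x y \<Longrightarrow> E y x" using assms(1) by (auto simp: simple_graph_def)
  have F: "distinct [u0, u1, u2, u3]" "E u0 u1" "E u0 u2" "E u1 u2" "E u0 u3"
    using assms(2) by (auto simp: is_F4_def)
  have T: "distinct [t1,t2,t3]" "E t1 t2" "E t2 t3" "E t3 t1"
    using assms(3) by (auto simp: is_triangle_def)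
  have D: "t1 \<noteq> u0" "t1 \<noteq> u1" "t1 \<noteq> u2" "t1 \<noteq> u3"
     "t2 \<noteq> u0" "t2 \<noteq> u1" "t2 \<noteq> u2" "t2 \<noteq> u3"
     "t3 \<noteq> u0" "t3 \<noteq> u1" "t3 \<noteq> u2" "t3 \<noteq> u3"
    using assms(4) by auto
  define U where "U = {u1,u2,u3}"
  define TT where "TT = {t1,t2,t3}"
  define S where "S = {(x, y). x \<in> U \<and> y \<in> TT \<and> E x y}"
  have cS: "card S \<ge> 7" using assms(5) by (simp add: e_between_def S_def U_def TT_def)
  have cA: "card (U \<times> TT) = 9" using F(1) T(1)
    by (simp add: U_def TT_def card_cartesian_product)
  have H: "\<And>a b c d e f. a \<in> U \<Longrightarrow> b \<in> TT \<Longrightarrow> c \<in> U \<Longrightarrow> d \<in> TT \<Longrightarrow> e \<in> U \<Longrightarrow> f \<in> TT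
     \<Longrightarrow> distinct [(a,b),(c,d),(e,f)] \<Longrightarrow> \<not> E a b \<Longrightarrow> \<not> E c d \<Longrightarrow> \<not> E e f \<Longrightarrow> False"
  proof -
    fix a b c d e f
    assume h: "a \<in> U" "b \<in> TT" "c \<in> U" "d \<in> TT" "e \<in> U" "f \<in> TT"
      "distinct [(a,b),(c,d),(e,f)]" "\<not> E a b" "\<not> E c d" "\<not> E e f"
    have "card S \<le> 6"
      by (rule card_le6[OF _ _ cA, of _ "(a,b)" "(c,d)" "(e,f)"])
        (use h in \<open>auto simp: S_def U_def TT_def\<close>)
    with cS show False by simp
  qed
  have m: "u1 \<in> U" "u2 \<in> U" "u3 \<in> U" "t1 \<in> TT" "t2 \<in> TT" "t3 \<in> TT"
    by (auto simp: U_def TT_def)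
  have dd: "u1 \<noteq> u2" "u1 \<noteq> u3" "u2 \<noteq> u3" "t1 \<noteq> t2" "t1 \<noteq> t3" "t2 \<noteq> t3"
    using F(1) T(1) by auto
  have L: "E x y" if "a \<in> TT" "b \<in> TT" "a \<noteq> b" "\<not> E u3 a" "\<not> E u3 b" "x \<in> U" "y \<in> TT"
    "(x,y) \<noteq> (u3,a)" "(x,y) \<noteq> (u3,b)" for a b x y
  proof (rule ccontr)
    assume "\<not> E x y"
    show False
      by (rule H[OF m(3) that(1) m(3) that(2) that(6) that(7)]) (use that \<open>\<not> E x y\<close> in auto)
  qed
  have key: "(E u3 t1 \<and> E u3 t2) \<or> (E u3 t1 \<and> E u3 t3) \<or> (E u3 t2 \<and> E u3 t3) \<or>
     (E u1 t1 \<and> E u1 t2 \<and> E u1 t3 \<and> E u2 t1 \<and> E u2 t2 \<and> E u2 t3 \<and> (E u3 t1 \<or> E u3 t2 \<or> E u3 t3))"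
  proof -
    consider (a) "E u3 t1" "E u3 t2" | (b) "E u3 t1" "E u3 t3" | (c) "E u3 t2" "E u3 t3"
      | (d) "\<not> E u3 t1" "\<not> E u3 t2" | (e) "\<not> E u3 t1" "\<not> E u3 t3" | (f) "\<not> E u3 t2" "\<not> E u3 t3"
      by blast
    then show ?thesis
    proof cases
      case d
      note X = L[OF m(4) m(5) dd(4) d]
      show ?thesis using X[OF m(1) m(4)] X[OF m(1) m(5)] X[OF m(1) m(6)]
        X[OF m(2) m(4)] X[OF m(2) m(5)] X[OF m(2) m(6)] X[OF m(3) m(6)] dd by auto
    next
      case e
      note X = L[OF m(4) m(6) dd(5) e]
      show ?thesis using X[OF m(1) m(4)] X[OF m(1) m(5)] X[OF m(1) m(6)]
        X[OF m(2) m(4)] X[OF m(2) m(5)] X[OF m(2) m(6)] X[OF m(3) m(5)] dd by auto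
    next
      case f
      note X = L[OF m(5) m(6) dd(6) f]
      show ?thesis using X[OF m(1) m(4)] X[OF m(1) m(5)] X[OF m(1) m(6)]
        X[OF m(2) m(4)] X[OF m(2) m(5)] X[OF m(2) m(6)] X[OF m(3) m(4)] dd by auto
    qed auto
  qed
  let ?W = "{t1, t2, t3} \<union> {u0, u1, u2, u3}"
  let ?G = "induced_edges E ?W"
  note defs = is_triangle_def is_quadrilateral_def induced_edges_def
  have A: "\<exists>a b c p q r s. is_triangle ?W ?G a b c \<and> is_quadrilateral ?W ?G p q r s
         \<and> {a, b, c} \<inter> {p, q, r, s} = {}"
    if "E u3 ta" "E u3 tb" "E ta tc" "E tc tb" "ta \<in> {t1,t2,t3}" "tb \<in> {t1,t2,t3}"
       "tc \<in> {t1,t2,t3}" "distinct [ta,tb,tc]" for ta tb tc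
    apply (rule exI[of _ u0], rule exI[of _ u1], rule exI[of _ u2])
    apply (rule exI[of _ u3], rule exI[of _ ta], rule exI[of _ tc], rule exI[of _ tb])
    using that F T D sym by (auto simp: defs)
  have B: "\<exists>a b c p q r s. is_triangle ?W ?G a b c \<and> is_quadrilateral ?W ?G p q r s
         \<and> {a, b, c} \<inter> {p, q, r, s} = {}"
    if "E u3 tc" "E u1 ta" "E u1 tb" "E u2 tc" "E ta tb" "ta \<in> {t1,t2,t3}" "tb \<in> {t1,t2,t3}"
       "tc \<in> {t1,t2,t3}" "distinct [ta,tb,tc]" for ta tb tc
    apply (rule exI[of _ u1], rule exI[of _ ta], rule exI[of _ tb])
    apply (rule exI[of _ u0], rule exI[of _ u3], rule exI[of _ tc], rule exI[of _ u2])
    using that F T D sym by (auto simp: defs)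
  show ?thesis
    using key
  proof (elim disjE conjE)
    assume "E u3 t1" "E u3 t2" thus ?thesis using A[of t1 t2 t3] T sym by auto
  next
    assume "E u3 t1" "E u3 t3" thus ?thesis using A[of t1 t3 t2] T sym by auto
  next
    assume "E u3 t2" "E u3 t3" thus ?thesis using A[of t2 t3 t1] T sym by auto
  next
    assume "E u1 t1" "E u1 t2" "E u1 t3" "E u2 t1" "E u2 t2" "E u2 t3" "E u3 t1"
    thus ?thesis using B[of t1 t2 t3] T sym by auto
  next
    assume "E u1 t1" "E u1 t2" "E u1 t3" "E u2 t1" "E u2 t2" "E u2 t3" "E u3 t2"
    thus ?thesis using B[of t2 t1 t3] T sym by auto
  next
    assume "E u1 t1" "E u1 t2" "E u1 t3" "E u2 t1" "E u2 t2" "E u2 t3" "E u3 t3"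
    thus ?thesis using B[of t3 t1 t2] T sym by auto
  qed
qed

end
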